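(* Let $0<i_1<i_2<\cdots<i_L$ be integers and let $\mathcal S=\{x_0,x_{i_1},\ldots,x_{i_L}\}$, with associated restricted right-arm rotation distance $d_{RRA}^{\mathcal S}$ (rotations allowed only at the root and at the right-arm nodes at levels $i_1,\ldots,i_L$). Let $T_1,T_2$ be finite rooted binary trees with the same number of nodes, forming a (not necessarily reduced) tree pair diagram $(T_1,T_2)$ representing $w\in F$, and let $w'=x_{a_1}^{r_1}\cdots x_{a_k}^{r_k}x_{b_l}^{-s_l}\cdots x_{b_1}^{-s_1}$ be the partially reduced normal form of maximum length of $w$ obtained from $(T_1,T_2)$. If some $x_t^{\pm1}$ with $1\le t\le i_1-1$ appears in $w'$, then $d_{RRA}^{\mathcal S}(T_1,T_2)$ is not defined. Conversely, if no $x_t^{\pm1}$ with $1\le t\le i_1-1$ appears in $w'$, then $d_{RRA}^{\mathcal S}(T_1,T_2)$ is defined.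
   Context: Trees: finite rooted binary trees, each internal vertex (node) having a left and a right child; a tree with $n$ nodes has $n+1$ leaves numbered $0,\ldots,n$ from left to right. The right arm consists of the root and the nodes reachable from it by right edges only; the level of a node is its distance from the root. Right rotation at a node $N$ whose left child $M$ is a node (with $A,B$ the subtrees of $M$ and $C$ the right subtree of $N$) replaces the subtree at $N$ by one whose root has left subtree $A$ and right child a node with subtrees $B,C$; left rotation is the inverse. Thompson's group $F=\langle x_0,x_1,\ldots\mid x_i^{-1}x_nx_i=x_{n+1}\ (i<n)\rangle$. The leaf exponent of leaf $k$ is the length of the longest upward path of left edges from leaf $k$ none of whose vertices lies on the right arm. The word associated to a tree pair diagram $(T_1,T_2)$ (trees with the same number $n$ of nodes) is $x_0^{f_0}\cdots x_n^{f_n}x_n^{-e_n}\cdots x_0^{-e_0}$ with $e_i$, $f_i$ the leaf exponents of leaf $i$ in $T_1$, $T_2$; $(T_1,T_2)$ represents the element this word defines. This word is a normal form $x_{a_1}^{r_1}\cdots x_{a_k}^{r_k}x_{b_l}^{-s_l}\cdots x_{b_1}^{-s_1}$ ($r_i,s_i>0$, $0\le a_1<\cdots<a_k$, $0\le b_1<\cdots<b_l$), not necessarily unique. Such a normal form is partially reduced if for every $i>0$, whenever both $x_i$ and $x_i^{-1}$ occur, at least one of $x_{i+1}^{\pm1}$ occurs (no condition is imposed for $i=0$). The partially reduced normal form of maximum length is obtained from the associated word by repeatedly applying the reductions $u\,x_i\,\phi(v)\,x_i^{-1}\,z\mapsto u\,v\,z$ only for $i>0$, where $\phi(x_j)=x_{j+1}$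 and $\phi(v)$ involves only generators of index at least $i+2$. Restricted right-arm rotation distance $d_{RRA}^{\mathcal S}(T_1,T_2)$: the minimal number of rotations, each at a right-arm node at one of the levels $0,i_1,\ldots,i_L$, transforming $T_1$ into $T_2$ (trees keep their number of nodes throughout); it is defined if such a sequence exists. *)

theory Defs
  imports Main
begin

datatype tree = Lf | Nd tree tree

fun num_nodes :: "tree \<Rightarrow> nat" where
  "num_nodes Lf = 0"
| "num_nodes (Nd l r) = Suc (num_nodes l + num_nodes r)"

fun rot_right :: "tree \<Rightarrow> tree option" where
  "rot_right (Nd (Nd a b) c) = Some (Nd a (Nd b c))"
| "rot_right _ = None"

fun rot_left :: "tree \<Rightarrow> tree option" where
  "rot_left (Nd a (Nd b c)) = Some (Nd (Nd a b) c)"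
| "rot_left _ = None"

text \<open>Apply an operation at the right-arm vertex of level j (reached from the root
  by j right edges), keeping the rest of the tree.\<close>
fun at_arm_level :: "nat \<Rightarrow> (tree \<Rightarrow> tree option) \<Rightarrow> tree \<Rightarrow> tree option" where
  "at_arm_level 0 f t = f t"
| "at_arm_level (Suc j) f (Nd l r) = map_option (Nd l) (at_arm_level j f r)"
| "at_arm_level (Suc j) f Lf = None"

definition rra_step :: "nat set \<Rightarrow> tree \<Rightarrow> tree \<Rightarrow> bool" where
  "rra_step Lv t t' \<longleftrightarrow>
     (\<exists>j\<in>Lv. at_arm_level j rot_right t = Some t' \<or> at_arm_level j rot_left t = Some t')"

definition rra_defined :: "nat set \<Rightarrow> tree \<Rightarrow> tree \<Rightarrow> bool" where
  "rra_defined Lv T1 T2 \<longleftrightarrow> (rra_step Lv)\<^sup>*\<^sup>* T1 T2"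

definition d_rra :: "nat set \<Rightarrow> tree \<Rightarrow> tree \<Rightarrow> nat" where
  "d_rra Lv T1 T2 = (LEAST k. (rra_step Lv ^^ k) T1 T2)"

text \<open>Leaf exponents (leaves listed left to right) of a subtree hanging off the right
  arm: upward left-edge paths stay inside the subtree (its parent is on the right arm).\<close>
fun sub_exps :: "tree \<Rightarrow> nat list" where
  "sub_exps Lf = [0]"
| "sub_exps (Nd l r) = (case sub_exps l of [] \<Rightarrow> [] | e # es \<Rightarrow> Suc e # es) @ sub_exps r"

fun leaf_exps :: "tree \<Rightarrow> nat list" where
  "leaf_exps Lf = [0]"
| "leaf_exps (Nd l r) = sub_exps l @ leaf_exps r"

text \<open>A normal form x_{a_1}^{r_1}...x_{a_k}^{r_k} x_{b_l}^{-s_l}...x_{b_1}^{-s_1} is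
  represented by the pair (p, q) of exponent functions: p i is the exponent of x_i in the
  positive part, q i the exponent of x_i^{-1} in the negative part.\<close>
type_synonym nform = "(nat \<Rightarrow> nat) \<times> (nat \<Rightarrow> nat)"

definition exps_fun :: "nat list \<Rightarrow> nat \<Rightarrow> nat" where
  "exps_fun es i = (if i < length es then es ! i else 0)"

text \<open>Associated word of (T1,T2): x_0^{f_0}...x_n^{f_n} x_n^{-e_n}...x_0^{-e_0}.\<close>
definition assoc_word :: "tree \<Rightarrow> tree \<Rightarrow> nform" where
  "assoc_word T1 T2 = (exps_fun (leaf_exps T2), exps_fun (leaf_exps T1))"

text \<open>Reduction u x_i phi(v) x_i^{-1} z to u v z, only for i > 0, where phi(v) only
  involves generators of index at least i+2.\<close>
definition reduce_step :: "nform \<Rightarrow> nform \<Rightarrow> bool" where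
  "reduce_step w w' \<longleftrightarrow>
     (\<exists>i>0. fst w i > 0 \<and> snd w i > 0 \<and> fst w (Suc i) = 0 \<and> snd w (Suc i) = 0 \<and>
        w' = ((\<lambda>j. if j < i then fst w j else if j = i then fst w i - 1 else fst w (Suc j)),
              (\<lambda>j. if j < i then snd w j else if j = i then snd w i - 1 else snd w (Suc j))))"

definition partially_reduced :: "nform \<Rightarrow> bool" where
  "partially_reduced w \<longleftrightarrow>
     (\<forall>i>0. fst w i > 0 \<and> snd w i > 0 \<longrightarrow> fst w (Suc i) > 0 \<or> snd w (Suc i) > 0)"

definition occurs :: "nform \<Rightarrow> nat \<Rightarrow> bool" where
  "occurs w t \<longleftrightarrow> fst w t > 0 \<or> snd w t > 0"

end

theory Submission
  imports Defs
begin

fun Dv :: "(nat \<Rightarrow> nat) \<Rightarrow> nat \<Rightarrow> int" where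
  "Dv e 0 = 0"
| "Dv e (Suc u) = Dv e u + 1 - int (e (Suc u))"

definition below :: "nat \<Rightarrow> (nat \<Rightarrow> nat) \<Rightarrow> nat \<Rightarrow> bool" where
  "below K e t \<longleftrightarrow> (\<forall>u<t. Dv e u < int K)"

definition Cf :: "nat \<Rightarrow> (nat \<Rightarrow> nat) \<Rightarrow> (nat \<Rightarrow> nat) \<Rightarrow> bool" where
  "Cf K a b \<longleftrightarrow> (\<forall>t. 1 \<le> t \<longrightarrow> below K a t \<longrightarrow> a t = b t)"

lemma Dv_agree: "(\<And>s. 1 \<le> s \<Longrightarrow> s \<le> u \<Longrightarrow> a s = b s) \<Longrightarrow> Dv a u = Dv b u"
  by (induction u) auto

lemma below_mono: "below K e t \<Longrightarrow> s \<le> t \<Longrightarrow> below K e s"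
  unfolding below_def by auto

lemma below_Suc: "below K e (Suc t) \<longleftrightarrow> below K e t \<and> Dv e t < int K"
  unfolding below_def by (auto simp: less_Suc_eq)

lemma Cf_agree: "Cf K a b \<Longrightarrow> below K a t \<Longrightarrow> 1 \<le> s \<Longrightarrow> s \<le> t \<Longrightarrow> a s = b s"
  unfolding Cf_def using below_mono by blast

lemma Cf_below: "Cf K a b \<Longrightarrow> below K a t \<longleftrightarrow> below K b t"
proof (induction t)
  case 0 then show ?case by (simp add: below_def)
next
  case (Suc t)
  show ?case
  proof (cases "below K a t")
    case True
    have "Dv a t = Dv b t" using Cf_agree[OF Suc.prems True] by (intro Dv_agree) auto
    then show ?thesis using True Suc by (simp add: below_Suc)
  next
    case False
    then show ?thesis using Suc by (simp add: below_Suc)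
  qed
qed

lemma Cf_refl: "Cf K a a" by (simp add: Cf_def)

lemma Cf_sym: "Cf K a b \<Longrightarrow> Cf K b a"
proof -
  assume C: "Cf K a b"
  show "Cf K b a" unfolding Cf_def
  proof (intro allI impI)
    fix t assume "1 \<le> t" "below K b t"
    then have "below K a t" using Cf_below[OF C] by simp
    then show "b t = a t" using C \<open>1 \<le> t\<close> unfolding Cf_def by simp
  qed
qed

lemma Cf_trans: "Cf K a b \<Longrightarrow> Cf K b c \<Longrightarrow> Cf K a c"
proof -
  assume C1: "Cf K a b" and C2: "Cf K b c"
  show "Cf K a c" unfolding Cf_def
  proof (intro allI impI)
    fix t assume t: "1 \<le> t" "below K a t"
    then have "below K b t" using Cf_below[OF C1] by simp
    then show "a t = c t" using C1 C2 t unfolding Cf_def by simp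
  qed
qed

lemma Dv_le: "Dv e u \<le> int u" by (induction u) auto

lemma Dv_zero: "(\<And>s. 1 \<le> s \<Longrightarrow> s \<le> u \<Longrightarrow> e s = 0) \<Longrightarrow> Dv e u = int u"
  by (induction u) auto

lemma Dv_red:
  assumes "0 < i" "0 < p i" "p (Suc i) = 0"
  and lt: "\<And>j. j < i \<Longrightarrow> p' j = p j" and eq: "p' i = p i - 1"
  and gt: "\<And>j. j > i \<Longrightarrow> p' j = p (Suc j)"
  shows "Dv p' u = (if u < i then Dv p u else Dv p (Suc u))"
proof (induction u)
  case 0 then show ?case using assms by simp
next
  case (Suc u)
  consider "Suc u < i" | "Suc u = i" | "Suc u > i" by linarith
  then show ?case
  proof cases
    case 1
    then have "Dv p' u = Dv p u" "p' (Suc u) = p (Suc u)" using Suc.IH lt by auto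
    then show ?thesis using 1 by simp
  next
    case 2
    have a1: "Dv p' u = Dv p u" using Suc.IH 2 by simp
    have a2: "p' (Suc u) = p i - 1" using eq 2 by simp
    have a3: "int (p i - 1) = int (p i) - 1" using assms(2) by simp
    have a4: "p (Suc u) = p i" "p (Suc (Suc u)) = 0" using 2 assms(3) by simp_all
    have e1: "Dv p' (Suc u) = Dv p' u + 1 - int (p' (Suc u))" by (simp only: Dv.simps)
    have e2: "Dv p (Suc (Suc u)) = Dv p u + 1 - int (p (Suc u)) + 1 - int (p (Suc (Suc u)))"
      by (simp only: Dv.simps)
    have "Dv p' (Suc u) = Dv p (Suc (Suc u))" using e1 e2 a1 a2 a3 a4 by simp
    then show ?thesis using 2 by simp
  next
    case 3
    then have a: "Dv p' u = Dv p (Suc u)" "p' (Suc u) = p (Suc (Suc u))" using Suc.IH gt by auto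
    then show ?thesis using 3 by simp
  qed
qed

lemma red_Cf:
  assumes "reduce_step w w'"
  shows "Cf K (fst w) (snd w) \<longleftrightarrow> Cf K (fst w') (snd w')"
proof -
  define p where "p = fst w"
  define q where "q = snd w"
  define p' where "p' = fst w'"
  define q' where "q' = snd w'"
  obtain i where i: "i > 0" "p i > 0" "q i > 0" "p (Suc i) = 0" "q (Suc i) = 0"
    and p'd: "p' = (\<lambda>j. if j < i then p j else if j = i then p i - 1 else p (Suc j))"
    and q'd: "q' = (\<lambda>j. if j < i then q j else if j = i then q i - 1 else q (Suc j))"
    using assms unfolding reduce_step_def p_def q_def p'_def q'_def by auto
  have plt: "\<And>j. j < i \<Longrightarrow> p' j = p j" and peq: "p' i = p i - 1"
    and pgt: "\<And>j. j > i \<Longrightarrow> p' j = p (Suc j)" using p'd by auto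
  have qlt: "\<And>j. j < i \<Longrightarrow> q' j = q j" and qeq: "q' i = q i - 1"
    and qgt: "\<And>j. j > i \<Longrightarrow> q' j = q (Suc j)" using q'd by auto
  have D: "\<And>u. Dv p' u = (if u < i then Dv p u else Dv p (Suc u))"
    using Dv_red[OF i(1) i(2) i(4) plt peq pgt] by blast
  have Dlt: "\<And>u. u < i \<Longrightarrow> Dv p' u = Dv p u" using D by simp
  have Dge: "\<And>u. u \<ge> i \<Longrightarrow> Dv p' u = Dv p (Suc u)" using D by simp
  obtain m where m: "i = Suc m" using i(1) gr0_conv_Suc by blast
  have Di: "Dv p i \<le> Dv p m"
    using i(2) unfolding m by simp
  have B1: "below K p' t \<longleftrightarrow> below K p t" if "t \<le> i" for t
  proof -
    have "\<forall>u<t. Dv p' u = Dv p u" using Dlt that by simp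
    then show ?thesis unfolding below_def by simp
  qed
  have B2: "\<And>t. t > i \<Longrightarrow> below K p' t \<longleftrightarrow> below K p (Suc t)"
  proof
    fix t assume t: "t > i" and b: "below K p' t"
    show "below K p (Suc t)" unfolding below_def
    proof (intro allI impI)
      fix u assume u: "u < Suc t"
      consider "u < i" | "u = i" | "u > i" by linarith
      then show "Dv p u < int K"
      proof cases
        case 1
        then have "Dv p' u < int K" using b t unfolding below_def by simp
        then show ?thesis using Dlt 1 by simp
      next
        case 2
        have "m < t" using m t by simp
        then have "Dv p' m < int K" using b unfolding below_def by simp
        then have "Dv p m < int K" using Dlt m by simp
        then show ?thesis using Di 2 by simp
      next
        case 3
        then obtain v where v: "u = Suc v" "v \<ge> i" by (cases u) auto
        have "v < t" using u v by simp
        then have "Dv p' v < int K" using b unfolding below_def by simp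
        then show ?thesis using Dge v by simp
      qed
    qed
  next
    fix t assume t: "t > i" and b: "below K p (Suc t)"
    show "below K p' t" unfolding below_def
    proof (intro allI impI)
      fix u assume u: "u < t"
      show "Dv p' u < int K"
      proof (cases "u < i")
        case True
        have "u < Suc t" using u by simp
        then have "Dv p u < int K" using b unfolding below_def by (simp del: Dv.simps)
        then show ?thesis using Dlt[OF True] by (simp del: Dv.simps)
      next
        case False
        have "Suc u < Suc t" using u by simp
        then have "Dv p (Suc u) < int K" using b unfolding below_def by (simp del: Dv.simps)
        then show ?thesis using Dge[of u] False by (simp del: Dv.simps)
      qed
    qed
  qed
  have "Cf K p q \<longleftrightarrow> Cf K p' q'"
  proof
    assume C: "Cf K p q"
    show "Cf K p' q'" unfolding Cf_def
    proof (intro allI impI)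
      fix t assume t1: "1 \<le> t" and b: "below K p' t"
      consider "t < i" | "t = i" | "t > i" by linarith
      then show "p' t = q' t"
      proof cases
        case 1
        then have "below K p t" using B1 b by simp
        then have "p t = q t" using C t1 unfolding Cf_def by simp
        then show ?thesis using 1 plt qlt by simp
      next
        case 2
        then have "below K p t" using B1 b by simp
        then have "p t = q t" using C t1 unfolding Cf_def by simp
        then show ?thesis using 2 peq qeq by simp
      next
        case 3
        have "below K p (Suc t)" using B2 3 b by blast
        then have "p (Suc t) = q (Suc t)" using C unfolding Cf_def by simp
        then show ?thesis using 3 pgt qgt by simp
      qed
    qed
  next
    assume C: "Cf K p' q'"
    show "Cf K p q" unfolding Cf_def
    proof (intro allI impI)
      fix t assume t1: "1 \<le> t" and b: "below K p t"
      consider "t < i" | "t = i" | "t = Suc i" | "t > Suc i" by linarith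
      then show "p t = q t"
      proof cases
        case 1
        then have "below K p' t" using B1 b by simp
        then have "p' t = q' t" using C t1 unfolding Cf_def by simp
        then show ?thesis using 1 plt qlt by simp
      next
        case 2
        then have "below K p' t" using B1 b by simp
        then have "p' t = q' t" using C t1 unfolding Cf_def by simp
        then have "p i - 1 = q i - 1" using 2 peq qeq by simp
        then show ?thesis using 2 i(2,3) by simp
      next
        case 3 then show ?thesis using i by simp
      next
        case 4
        then obtain s where s: "t = Suc s" "s > i" by (cases t) auto
        have "below K p' s" using B2[of s] s b by simp
        then have "p' s = q' s" using C s i(1) unfolding Cf_def by simp
        then show ?thesis using s pgt qgt by simp
      qed
    qed
  qed
  then show ?thesis unfolding p_def q_def p'_def q'_def .
qed

lemma reds_Cf:
  assumes "reduce_step\<^sup>*\<^sup>* w w'"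
  shows "Cf K (fst w) (snd w) \<longleftrightarrow> Cf K (fst w') (snd w')"
  using assms by (induction rule: rtranclp_induct) (auto dest: red_Cf[where K=K])

lemma reds_fin:
  assumes "reduce_step\<^sup>*\<^sup>* w w'" "\<forall>j\<ge>N. fst w j = 0 \<and> snd w j = 0"
  shows "\<forall>j\<ge>N. fst w' j = 0 \<and> snd w' j = 0"
  using assms
proof (induction rule: rtranclp_induct)
  case base then show ?case by simp
next
  case (step y z)
  then have Y: "\<forall>j\<ge>N. fst y j = 0 \<and> snd y j = 0" by blast
  obtain i where i: "i > 0" "fst y i > 0" "snd y i > 0"
    and z: "z = ((\<lambda>j. if j < i then fst y j else if j = i then fst y i - 1 else fst y (Suc j)),
              (\<lambda>j. if j < i then snd y j else if j = i then snd y i - 1 else snd y (Suc j)))"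
    using step(2) unfolding reduce_step_def by blast
  have "i < N"
  proof (rule ccontr)
    assume "\<not> i < N"
    then have "fst y i = 0" using Y by simp
    then show False using i by simp
  qed
  then show ?case using Y z by auto
qed

lemma noocc_Cf:
  assumes "\<not> (\<exists>t. 1 \<le> t \<and> t \<le> K \<and> occurs w t)"
  shows "Cf K (fst w) (snd w)"
  unfolding Cf_def
proof (intro allI impI)
  fix t assume t1: "1 \<le> t" and b: "below K (fst w) t"
  show "fst w t = snd w t"
  proof (cases "t \<le> K")
    case True then show ?thesis using assms t1 unfolding occurs_def by auto
  next
    case False
    have "Dv (fst w) K = int K" using assms unfolding occurs_def by (intro Dv_zero) auto
    moreover have "Dv (fst w) K < int K" using b False unfolding below_def by auto
    ultimately show ?thesis by simp
  qed
qed

lemma Cf_noocc: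
  assumes "Cf K (fst w) (snd w)" "partially_reduced w" "\<forall>j\<ge>N. fst w j = 0 \<and> snd w j = 0"
  shows "\<not> (\<exists>t. 1 \<le> t \<and> t \<le> K \<and> occurs w t)"
proof
  assume "\<exists>t. 1 \<le> t \<and> t \<le> K \<and> occurs w t"
  then obtain t where t: "1 \<le> t" "t \<le> K" "occurs w t" by blast
  define p where "p = fst w"
  define q where "q = snd w"
  have bt: "below K p t" unfolding below_def
  proof (intro allI impI)
    fix u assume "u < t"
    then show "Dv p u < int K" using Dv_le[of p u] t(2) by linarith
  qed
  have C: "Cf K p q" using assms(1) p_def q_def by simp
  have "p t = q t" using C bt t(1) unfolding Cf_def by blast
  then have pt: "p t > 0" "q t > 0" using t(3) unfolding occurs_def p_def q_def by auto
  have main: "below K p (t + m) \<and> p (t + m) > 0 \<and> q (t + m) > 0" for m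
  proof (induction m)
    case 0 then show ?case using bt pt by simp
  next
    case (Suc m)
    have b: "below K p (t + m)" and pos: "p (t + m) > 0" "q (t+m) > 0" using Suc by auto
    obtain v where v: "t + m = Suc v" using t(1) by (cases "t + m") auto
    have "v < t + m" using v by simp
    then have "Dv p v < int K" using b unfolding below_def by (simp del: Dv.simps)
    then have "Dv p (t + m) < int K" using pos v by simp
    then have b2: "below K p (Suc (t + m))" using b below_Suc by blast
    have eq: "p (Suc (t + m)) = q (Suc (t + m))" using C b2 unfolding Cf_def by auto
    have "p (Suc (t+m)) > 0 \<or> q (Suc (t+m)) > 0"
      using assms(2) pos v unfolding partially_reduced_def p_def q_def by auto
    then show ?case using eq b2 by auto
  qed
  have "p (t + N) > 0" using main by blast
  moreover have "p (t + N) = 0" using assms(3) p_def by auto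
  ultimately show False by simp
qed

lemma se_ne: "sub_exps t \<noteq> []"
  by (induction t) (auto split: list.split)

lemma se_len: "length (sub_exps t) = Suc (num_nodes t)"
proof (induction t)
  case Lf then show ?case by simp
next
  case (Nd l r)
  obtain x xs where "sub_exps l = x # xs" using se_ne by (cases "sub_exps l") auto
  then show ?case using Nd by simp
qed

lemma se_sum: "sum_list (sub_exps t) = num_nodes t"
proof (induction t)
  case Lf then show ?case by simp
next
  case (Nd l r)
  obtain x xs where "sub_exps l = x # xs" using se_ne by (cases "sub_exps l") auto
  then show ?case using Nd by simp
qed

lemma le_len: "length (leaf_exps t) = Suc (num_nodes t)"
  by (induction t) (auto simp: se_len)

lemma se_prefix: "sub_exps a @ X = sub_exps b @ Y \<Longrightarrow> a = b \<and> X = Y"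
proof (induction a arbitrary: b X Y)
  case Lf
  show ?case
  proof (cases b)
    case Lf then show ?thesis using Lf.prems by simp
  next
    case (Nd b1 b2)
    obtain y ys where "sub_exps b1 = y # ys" using se_ne by (cases "sub_exps b1") auto
    then show ?thesis using Lf.prems Nd by simp
  qed
next
  case (Nd a1 a2)
  obtain x xs where x: "sub_exps a1 = x # xs" using se_ne by (cases "sub_exps a1") auto
  show ?case
  proof (cases b)
    case Lf then show ?thesis using Nd.prems x by simp
  next
    case (Nd b1 b2)
    obtain y ys where y: "sub_exps b1 = y # ys" using se_ne by (cases "sub_exps b1") auto
    have "Suc x # xs @ sub_exps a2 @ X = Suc y # ys @ sub_exps b2 @ Y"
      using Nd.prems x y \<open>b = Nd b1 b2\<close> by simp
    then have "sub_exps a1 @ (sub_exps a2 @ X) = sub_exps b1 @ (sub_exps b2 @ Y)"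
      using x y by simp
    then have h1: "a1 = b1" and h2: "sub_exps a2 @ X = sub_exps b2 @ Y" using Nd.IH(1) by blast+
    then show ?thesis using Nd.IH(2)[OF h2] \<open>b = Nd b1 b2\<close> by simp
  qed
qed

lemma le_inj: "leaf_exps t1 = leaf_exps t2 \<Longrightarrow> t1 = t2"
proof (induction t1 arbitrary: t2)
  case Lf
  show ?case
  proof (cases t2)
    case Lf then show ?thesis by simp
  next
    case (Nd l2 r2)
    then have "length (leaf_exps Lf) = length (leaf_exps (Nd l2 r2))" using Lf.prems by simp
    then show ?thesis by (simp add: se_len le_len)
  qed
next
  case (Nd l r)
  show ?case
  proof (cases t2)
    case Lf
    then have "length (leaf_exps (Nd l r)) = 1" using Nd.prems by simp
    then show ?thesis by (simp add: se_len le_len)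
  next
    case (Nd l2 r2)
    then have "sub_exps l @ leaf_exps r = sub_exps l2 @ leaf_exps r2" using Nd.prems by simp
    then show ?thesis using se_prefix Nd.IH \<open>t2 = Nd l2 r2\<close> by blast
  qed
qed

lemma exps_fun_Cons_Suc: "exps_fun (x # M) (Suc u) = exps_fun M u"
  by (simp add: exps_fun_def)

lemma Dv_list: "Dv (exps_fun (x # M)) u = int u - int (sum_list (take u M))"
proof (induction u)
  case 0 then show ?case by simp
next
  case (Suc u)
  show ?case
  proof (cases "u < length M")
    case True
    then show ?thesis using Suc by (simp add: exps_fun_def take_Suc_conv_app_nth)
  next
    case False
    then show ?thesis using Suc by (simp add: exps_fun_def)
  qed
qed

lemma arm_prefix:
  "at_arm_level j f t = Some t' \<Longrightarrow>
   \<exists>P X X'. leaf_exps t = P @ X \<and> leaf_exps t' = P @ X' \<and>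
     int j \<le> int (length P) - int (sum_list P)"
proof (induction j f t arbitrary: t' rule: at_arm_level.induct)
  case (1 f t) show ?case by (intro exI[of _ "[]"] exI[of _ "leaf_exps t"] exI[of _ "leaf_exps t'"]) simp
next
  case (2 j f l r)
  then obtain r' where r': "at_arm_level j f r = Some r'" "t' = Nd l r'" by auto
  obtain P X X' where P: "leaf_exps r = P @ X" "leaf_exps r' = P @ X'"
    "int j \<le> int (length P) - int (sum_list P)" using 2(1)[OF r'(1)] by blast
  show ?case
    apply (rule exI[of _ "sub_exps l @ P"], rule exI[of _ X], rule exI[of _ X'])
    using P r' by (simp add: se_len se_sum)
next
  case (3 j f) then show ?case by simp
qed

lemma rot0_exps:
  assumes "rot_right t = Some t' \<or> rot_left t = Some t'"
  shows "\<exists>x y M. leaf_exps t = x # M \<and> leaf_exps t' = y # M"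
  using assms
proof (elim disjE)
  assume "rot_right t = Some t'"
  then obtain a b c where e: "t = Nd (Nd a b) c" "t' = Nd a (Nd b c)"
    by (cases t rule: rot_right.cases) auto
  obtain x xs where "sub_exps a = x # xs" using se_ne by (cases "sub_exps a") auto
  then show ?thesis using e by simp
next
  assume "rot_left t = Some t'"
  then obtain a b c where e: "t = Nd a (Nd b c)" "t' = Nd (Nd a b) c"
    by (cases t rule: rot_left.cases) auto
  obtain x xs where "sub_exps a = x # xs" using se_ne by (cases "sub_exps a") auto
  then show ?thesis using e by simp
qed

abbreviation ef :: "tree \<Rightarrow> nat \<Rightarrow> nat" where
  "ef t \<equiv> exps_fun (leaf_exps t)"

lemma step_Cf:
  assumes lv: "\<forall>j\<in>Lv. j = 0 \<or> Suc K \<le> j" and st: "rra_step Lv t t'"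
  shows "Cf K (ef t) (ef t')"
proof -
  obtain j where j: "j \<in> Lv" and f: "at_arm_level j rot_right t = Some t' \<or> at_arm_level j rot_left t = Some t'"
    using st unfolding rra_step_def by blast
  show ?thesis
  proof (cases "j = 0")
    case True
    then have "rot_right t = Some t' \<or> rot_left t = Some t'" using f by simp
    then obtain x y M where e: "leaf_exps t = x # M" "leaf_exps t' = y # M" using rot0_exps by blast
    show ?thesis unfolding Cf_def
    proof (intro allI impI)
      fix u :: nat assume "1 \<le> u"
      then obtain v where "u = Suc v" by (cases u) auto
      then show "ef t u = ef t' u" using e by (simp add: exps_fun_Cons_Suc)
    qed
  next
    case False
    have "j = 0 \<or> Suc K \<le> j" using lv j by (rule bspec)
    then have jk: "Suc K \<le> j" using False by simp
    obtain P X X' where P: "leaf_exps t = P @ X" "leaf_exps t' = P @ X'"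
      "int j \<le> int (length P) - int (sum_list P)"
    proof -
      have "\<exists>P X X'. leaf_exps t = P @ X \<and> leaf_exps t' = P @ X' \<and>
        int j \<le> int (length P) - int (sum_list P)"
        using f
      proof (elim disjE)
        assume "at_arm_level j rot_right t = Some t'"
        from arm_prefix[OF this] show ?thesis .
      next
        assume "at_arm_level j rot_left t = Some t'"
        from arm_prefix[OF this] show ?thesis .
      qed
      then show ?thesis using that by blast
    qed
    have "P \<noteq> []"
    proof
      assume "P = []"
      then have "int j \<le> 0" using P(3) by simp
      then show False using jk by simp
    qed
    then obtain x M where xM: "P = x # M" by (cases P) auto
    show ?thesis unfolding Cf_def
    proof (intro allI impI)
      fix u :: nat assume u1: "1 \<le> u" and b: "below K (ef t) u"
      show "ef t u = ef t' u"
      proof (cases "u < length P")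
        case True
        then show ?thesis using P by (simp add: exps_fun_def nth_append)
      next
        case False
        then have "length M < u" using xM by simp
        then have "Dv (ef t) (length M) < int K" using b unfolding below_def by (simp del: Dv.simps)
        moreover have "Dv (ef t) (length M) = int (length M) - int (sum_list M)"
          using P(1) xM Dv_list[of x "M @ X" "length M"] by simp
        moreover have "int j \<le> int (length M) + 1 - int x - int (sum_list M)" using P(3) xM by simp
        ultimately show ?thesis using jk by simp
      qed
    qed
  qed
qed

lemma G_Cf:
  assumes lv: "\<forall>j\<in>Lv. j = 0 \<or> Suc K \<le> j" and g: "(rra_step Lv)\<^sup>*\<^sup>* t t'"
  shows "Cf K (ef t) (ef t')"
  using g
proof (induction rule: rtranclp_induct)
  case base then show ?case by (rule Cf_refl)
next
  case (step y z)
  then show ?case using step_Cf[OF lv step(2)] Cf_trans by blast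
qed

lemma rot_sym0: "rot_right t = Some t' \<longleftrightarrow> rot_left t' = Some t"
proof
  assume "rot_right t = Some t'"
  then obtain a b c where "t = Nd (Nd a b) c" "t' = Nd a (Nd b c)"
    by (cases t rule: rot_right.cases) auto
  then show "rot_left t' = Some t" by simp
next
  assume "rot_left t' = Some t"
  then obtain a b c where "t' = Nd a (Nd b c)" "t = Nd (Nd a b) c"
    by (cases t' rule: rot_left.cases) auto
  then show "rot_right t = Some t'" by simp
qed

lemma arm_Suc: "at_arm_level (Suc j) f t = Some t' \<longleftrightarrow>
   (\<exists>l r r'. t = Nd l r \<and> t' = Nd l r' \<and> at_arm_level j f r = Some r')"
  by (cases t) auto

lemma arm_sym: "at_arm_level j rot_right t = Some t' \<longleftrightarrow> at_arm_level j rot_left t' = Some t"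
proof (induction j arbitrary: t t')
  case 0 then show ?case using rot_sym0 by simp
next
  case (Suc j) then show ?case unfolding arm_Suc by auto
qed

lemma step_sym: "rra_step Lv t t' \<Longrightarrow> rra_step Lv t' t"
proof -
  assume "rra_step Lv t t'"
  then obtain j where j: "j \<in> Lv" and
    f: "at_arm_level j rot_right t = Some t' \<or> at_arm_level j rot_left t = Some t'"
    unfolding rra_step_def by blast
  have "at_arm_level j rot_left t' = Some t \<or> at_arm_level j rot_right t' = Some t"
    using f arm_sym by simp
  then show "rra_step Lv t' t" unfolding rra_step_def using j by blast
qed

lemma G_sym: "(rra_step Lv)\<^sup>*\<^sup>* t t' \<Longrightarrow> (rra_step Lv)\<^sup>*\<^sup>* t' t"
proof (induction rule: rtranclp_induct)
  case base then show ?case by simp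
next
  case (step y z)
  show ?case using converse_rtranclp_into_rtranclp[OF step_sym[OF step(2)] step(3)] .
qed

lemma arm_nodes:
  "at_arm_level j f t = Some t' \<Longrightarrow> (\<And>s s'. f s = Some s' \<Longrightarrow> num_nodes s' = num_nodes s)
   \<Longrightarrow> num_nodes t' = num_nodes t"
  by (induction j f t arbitrary: t' rule: at_arm_level.induct) auto

lemma rr_nodes: "rot_right s = Some s' \<Longrightarrow> num_nodes s' = num_nodes s"
  by (cases s rule: rot_right.cases) auto

lemma rl_nodes: "rot_left s = Some s' \<Longrightarrow> num_nodes s' = num_nodes s"
  by (cases s rule: rot_left.cases) auto

lemma step_nodes: "rra_step Lv t t' \<Longrightarrow> num_nodes t' = num_nodes t"
  unfolding rra_step_def using arm_nodes rr_nodes rl_nodes by metis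

lemma G_nodes: "(rra_step Lv)\<^sup>*\<^sup>* t t' \<Longrightarrow> num_nodes t' = num_nodes t"
  by (induction rule: rtranclp_induct) (auto dest: step_nodes)

lemma root_step_r: "0 \<in> Lv \<Longrightarrow> rot_right t = Some t' \<Longrightarrow> rra_step Lv t t'"
  unfolding rra_step_def by (intro bexI[of _ 0]) auto

lemma root_step_l: "0 \<in> Lv \<Longrightarrow> rot_left t = Some t' \<Longrightarrow> rra_step Lv t t'"
  unfolding rra_step_def by (intro bexI[of _ 0]) auto

lemma simul_aux:
  assumes "0 \<in> Lv" "k \<in> Lv" "1 \<le> k"
  shows "\<forall>t t'. at_arm_level (k + d) rot_right t = Some t' \<longrightarrow> (rra_step Lv)\<^sup>*\<^sup>* t t'"
proof (induction d)
  case 0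
  show ?case
  proof (intro allI impI)
    fix t t' assume "at_arm_level (k + 0) rot_right t = Some t'"
    then have "rra_step Lv t t'" unfolding rra_step_def using assms(2) by (intro bexI[of _ k]) auto
    then show "(rra_step Lv)\<^sup>*\<^sup>* t t'" by simp
  qed
next
  case (Suc d)
  obtain m where m: "k + d = Suc m" using assms(3) by (cases "k + d") auto
  show ?case
  proof (intro allI impI)
    fix t t' assume h: "at_arm_level (k + Suc d) rot_right t = Some t'"
    then have "at_arm_level (Suc (Suc m)) rot_right t = Some t'" using m by simp
    then obtain a r r'' where e1: "t = Nd a r" "t' = Nd a r''" "at_arm_level (Suc m) rot_right r = Some r''"
      unfolding arm_Suc by blast
    then obtain b c c' where e2: "r = Nd b c" "r'' = Nd b c'" "at_arm_level m rot_right c = Some c'"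
      unfolding arm_Suc by blast
    have s1: "rra_step Lv t (Nd (Nd a b) c)" using root_step_l[OF assms(1)] e1 e2 by simp
    have "at_arm_level (Suc m) rot_right (Nd (Nd a b) c) = Some (Nd (Nd a b) c')" using e2 by simp
    then have s2: "(rra_step Lv)\<^sup>*\<^sup>* (Nd (Nd a b) c) (Nd (Nd a b) c')" using Suc.IH m by simp
    have s3: "rra_step Lv (Nd (Nd a b) c') t'" using root_step_r[OF assms(1)] e1 e2 by simp
    show "(rra_step Lv)\<^sup>*\<^sup>* t t'"
      using converse_rtranclp_into_rtranclp[OF s1 rtranclp.rtrancl_into_rtrancl[OF s2 s3]] .
  qed
qed

lemma simul:
  assumes "0 \<in> Lv" "k \<in> Lv" "1 \<le> k" "k \<le> j" "at_arm_level j rot_right t = Some t'"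
  shows "(rra_step Lv)\<^sup>*\<^sup>* t t'"
proof -
  have "j = k + (j - k)" using assms(4) by simp
  then show ?thesis using simul_aux[OF assms(1-3), of "j - k"] assms(5) by metis
qed

lemma phaseB:
  assumes "0 \<in> Lv"
  shows "\<exists>R. (rra_step Lv)\<^sup>*\<^sup>* (Nd l c) (Nd Lf R)"
proof (induction l arbitrary: c)
  case Lf then show ?case by blast
next
  case (Nd a b)
  have s: "rra_step Lv (Nd (Nd a b) c) (Nd a (Nd b c))" using root_step_r[OF assms] by simp
  obtain R where R: "(rra_step Lv)\<^sup>*\<^sup>* (Nd a (Nd b c)) (Nd Lf R)" using Nd.IH(1) by blast
  have "(rra_step Lv)\<^sup>*\<^sup>* (Nd (Nd a b) c) (Nd Lf R)"
    by (rule converse_rtranclp_into_rtranclp[of "rra_step Lv", OF s R])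
  then show ?case by blast
qed

definition put :: "tree list \<Rightarrow> tree \<Rightarrow> tree" where
  "put ls S = foldr Nd ls S"

lemma at_put: "at_arm_level (length ls + j) f (put ls S) = map_option (put ls) (at_arm_level j f S)"
  by (induction ls) (auto simp: put_def option.map_comp comp_def option.map_ident)

lemma put_snoc: "put (ls @ [l]) S = put ls (Nd l S)"
  by (simp add: put_def)

lemma put_Cons: "put (l # ls) S = Nd l (put ls S)"
  by (simp add: put_def)

lemma le_put: "leaf_exps (put ls S) = concat (map sub_exps ls) @ leaf_exps S"
  by (induction ls) (auto simp: put_def)

fun is_vine :: "tree \<Rightarrow> bool" where
  "is_vine Lf = True"
| "is_vine (Nd l r) = (l = Lf \<and> is_vine r)"

lemma vine_exps: "is_vine V \<Longrightarrow> \<forall>x\<in>set (leaf_exps V). x = 0"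
  by (induction V) auto

lemma vin_inner:
  assumes sim: "\<And>j t t'. k \<le> j \<Longrightarrow> at_arm_level j rot_right t = Some t' \<Longrightarrow> (rra_step Lv)\<^sup>*\<^sup>* t t'"
  and IH: "\<And>S' ls'. num_nodes S' < n \<Longrightarrow> k \<le> length ls' \<Longrightarrow>
      \<exists>V. (rra_step Lv)\<^sup>*\<^sup>* (put ls' S') (put ls' V) \<and> is_vine V"
  and kl: "k \<le> length ls"
  shows "num_nodes (Nd l c) = n \<Longrightarrow> \<exists>V. (rra_step Lv)\<^sup>*\<^sup>* (put ls (Nd l c)) (put ls V) \<and> is_vine V"
proof (induction l arbitrary: c)
  case Lf
  have "num_nodes c < n" using Lf.prems by simp
  moreover have "k \<le> length (ls @ [Lf])" using kl by simp
  ultimately obtain V where V: "(rra_step Lv)\<^sup>*\<^sup>* (put (ls @ [Lf]) c) (put (ls @ [Lf]) V)" "is_vine V"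
    using IH by blast
  then show ?case by (intro exI[of _ "Nd Lf V"]) (simp add: put_snoc)
next
  case (Nd a b)
  have "at_arm_level (length ls + 0) rot_right (put ls (Nd (Nd a b) c)) = Some (put ls (Nd a (Nd b c)))"
    by (simp only: at_put) simp
  then have s: "(rra_step Lv)\<^sup>*\<^sup>* (put ls (Nd (Nd a b) c)) (put ls (Nd a (Nd b c)))"
    using sim kl by simp
  have "num_nodes (Nd a (Nd b c)) = n" using Nd.prems by simp
  then obtain V where V: "(rra_step Lv)\<^sup>*\<^sup>* (put ls (Nd a (Nd b c))) (put ls V)" "is_vine V"
    using Nd.IH(1) by blast
  then show ?case using rtranclp_trans[OF s V(1)] by blast
qed

lemma vinify:
  assumes sim: "\<And>j t t'. k \<le> j \<Longrightarrow> at_arm_level j rot_right t = Some t' \<Longrightarrow> (rra_step Lv)\<^sup>*\<^sup>* t t'"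
  shows "k \<le> length ls \<Longrightarrow> \<exists>V. (rra_step Lv)\<^sup>*\<^sup>* (put ls S) (put ls V) \<and> is_vine V"
proof (induction "num_nodes S" arbitrary: S ls rule: less_induct)
  case less
  show ?case
  proof (cases S)
    case Lf then show ?thesis by (intro exI[of _ Lf]) simp
  next
    case (Nd l c)
    have IH: "\<And>S' ls'. num_nodes S' < num_nodes S \<Longrightarrow> k \<le> length ls' \<Longrightarrow>
      \<exists>V. (rra_step Lv)\<^sup>*\<^sup>* (put ls' S') (put ls' V) \<and> is_vine V"
      using less.hyps by blast
    have nn: "num_nodes (Nd l c) = num_nodes S" using Nd by simp
    have "\<exists>V. (rra_step Lv)\<^sup>*\<^sup>* (put ls (Nd l c)) (put ls V) \<and> is_vine V"
    proof (rule vin_inner[where k=k and Lv=Lv and n="num_nodes S" and ls=ls])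
      show "\<And>j t t'. k \<le> j \<Longrightarrow> at_arm_level j rot_right t = Some t' \<Longrightarrow> (rra_step Lv)\<^sup>*\<^sup>* t t'"
        by (rule sim)
      show "\<And>S' ls'. num_nodes S' < num_nodes S \<Longrightarrow> k \<le> length ls' \<Longrightarrow>
        \<exists>V. (rra_step Lv)\<^sup>*\<^sup>* (put ls' S') (put ls' V) \<and> is_vine V"
        by (rule IH)
      show "k \<le> length ls" by (rule less.prems)
      show "num_nodes (Nd l c) = num_nodes S" by (rule nn)
    qed
    then show ?thesis using Nd by simp
  qed
qed

lemma split_arm: "\<exists>ls S. T = put ls S \<and> length ls \<le> m \<and> (length ls < m \<longrightarrow> S = Lf)"
proof (induction m arbitrary: T)
  case 0 show ?case by (intro exI[of _ "[]"] exI[of _ T]) (simp add: put_def)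
next
  case (Suc m)
  show ?case
  proof (cases T)
    case Lf then show ?thesis by (intro exI[of _ "[]"] exI[of _ Lf]) (simp add: put_def)
  next
    case (Nd l r)
    obtain ls S where "r = put ls S" "length ls \<le> m" "length ls < m \<longrightarrow> S = Lf"
      using Suc.IH by blast
    then show ?thesis using Nd by (intro exI[of _ "l # ls"] exI[of _ S]) (simp add: put_Cons)
  qed
qed

definition canon :: "nat \<Rightarrow> tree \<Rightarrow> bool" where
  "canon K N \<longleftrightarrow> N = Lf \<or> (\<exists>ls V. N = put (Lf # ls) V \<and> length ls \<le> K \<and> is_vine V)"

lemma reach_canon:
  assumes "0 \<in> Lv" "Suc K \<in> Lv"
  shows "\<exists>N. (rra_step Lv)\<^sup>*\<^sup>* T N \<and> canon K N"
proof (cases T)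
  case Lf then show ?thesis unfolding canon_def by blast
next
  case (Nd l c)
  obtain R where R: "(rra_step Lv)\<^sup>*\<^sup>* T (Nd Lf R)" using phaseB[OF assms(1)] Nd by blast
  obtain ls S where S: "R = put ls S" "length ls \<le> K" "length ls < K \<longrightarrow> S = Lf"
    using split_arm by blast
  have NR: "Nd Lf R = put (Lf # ls) S" using S(1) by (simp add: put_Cons)
  show ?thesis
  proof (cases "length ls < K")
    case True
    then have "canon K (Nd Lf R)" unfolding canon_def
      by (intro disjI2 exI[of _ ls] exI[of _ S]) (use NR S True in auto)
    then show ?thesis using R by blast
  next
    case False
    have sim: "\<And>j t t'. Suc K \<le> j \<Longrightarrow> at_arm_level j rot_right t = Some t' \<Longrightarrow> (rra_step Lv)\<^sup>*\<^sup>* t t'"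
      using simul[OF assms(1) assms(2)] by simp
    have kl: "Suc K \<le> length (Lf # ls)" using False by simp
    have "\<exists>V. (rra_step Lv)\<^sup>*\<^sup>* (put (Lf # ls) S) (put (Lf # ls) V) \<and> is_vine V"
    proof (rule vinify[where k="Suc K" and Lv=Lv])
      show "\<And>j t t'. Suc K \<le> j \<Longrightarrow> at_arm_level j rot_right t = Some t' \<Longrightarrow> (rra_step Lv)\<^sup>*\<^sup>* t t'"
        by (rule sim)
      show "Suc K \<le> length (Lf # ls)" by (rule kl)
    qed
    then obtain V where V: "(rra_step Lv)\<^sup>*\<^sup>* (put (Lf # ls) S) (put (Lf # ls) V)" "is_vine V"
      by blast
    have "canon K (put (Lf # ls) V)" unfolding canon_def using V S by auto
    then show ?thesis using rtranclp_trans[OF R] V NR by metis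
  qed
qed

lemma se_prefix_prop: "v < length (sub_exps l) \<Longrightarrow> int v - int (sum_list (take v (sub_exps l))) \<le> 0"
proof (induction l arbitrary: v)
  case Lf then show ?case by simp
next
  case (Nd a b)
  obtain x xs where x: "sub_exps a = x # xs" using se_ne by (cases "sub_exps a") auto
  have e: "sub_exps (Nd a b) = Suc x # xs @ sub_exps b" using x by simp
  have la: "length (sub_exps a) = Suc (length xs)" using x by simp
  have sa: "x + sum_list xs = num_nodes a" using se_sum[of a] x by simp
  have lna: "length xs = num_nodes a" using se_len[of a] x by simp
  show ?case
  proof (cases "v < Suc (length xs)")
    case True
    show ?thesis
    proof (cases v)
      case 0 then show ?thesis by simp
    next
      case (Suc v')
      then have v': "v' < length xs" using True by simp
      have t1: "take v (sub_exps (Nd a b)) = Suc x # take v' xs" using e Suc v' by simp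
      have t2: "take v (sub_exps a) = x # take v' xs" using x Suc by simp
      have "int v - int (sum_list (take v (sub_exps a))) \<le> 0" using Nd.IH(1) la True by simp
      then show ?thesis using t1 t2 by simp
    qed
  next
    case False
    define v' where "v' = v - Suc (length xs)"
    have v: "v = Suc (length xs) + v'" using False v'_def by simp
    have "v < length (sub_exps (Nd a b))" using Nd.prems .
    then have v'l: "v' < length (sub_exps b)" using e v by simp
    have t1: "take v (sub_exps (Nd a b)) = Suc x # xs @ take v' (sub_exps b)" using e v by simp
    have "int v' - int (sum_list (take v' (sub_exps b))) \<le> 0" using Nd.IH(2) v'l by simp
    then show ?thesis using t1 v sa lna by simp
  qed
qed

lemma blocks: "v < length (concat (map sub_exps ls)) \<Longrightarrow>
  int v - int (sum_list (take v (concat (map sub_exps ls)))) < int (length ls)"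
proof (induction ls arbitrary: v)
  case Nil then show ?case by simp
next
  case (Cons l ls)
  have e: "concat (map sub_exps (l # ls)) = sub_exps l @ concat (map sub_exps ls)" by simp
  show ?case
  proof (cases "v < length (sub_exps l)")
    case True
    have "take v (concat (map sub_exps (l # ls))) = take v (sub_exps l)" using e True by simp
    then show ?thesis using se_prefix_prop[OF True] by simp
  next
    case False
    define v' where "v' = v - length (sub_exps l)"
    have v: "v = length (sub_exps l) + v'" using False v'_def by simp
    have v'l: "v' < length (concat (map sub_exps ls))" using Cons.prems e v by simp
    have t: "take v (concat (map sub_exps (l # ls))) = sub_exps l @ take v' (concat (map sub_exps ls))"
      using e v by simp
    have "int v' - int (sum_list (take v' (concat (map sub_exps ls)))) < int (length ls)"
      using Cons.IH v'l by simp
    then show ?thesis using t v se_len[of l] se_sum[of l] by simp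
  qed
qed

lemma canon_exps:
  assumes "canon K N"
  shows "ef N 0 = 0 \<and> (\<forall>u. 1 \<le> u \<longrightarrow> \<not> below K (ef N) u \<longrightarrow> ef N u = 0)"
proof (cases "N = Lf")
  case True
  have "exps_fun [0] u = 0" for u by (simp add: exps_fun_def)
  then show ?thesis using True by simp
next
  case False
  then obtain ls V where N: "N = put (Lf # ls) V" "length ls \<le> K" "is_vine V"
    using assms unfolding canon_def by blast
  define P where "P = concat (map sub_exps ls)"
  define Z where "Z = leaf_exps V"
  have le: "leaf_exps N = 0 # (P @ Z)" using N(1) unfolding P_def Z_def by (simp add: le_put)
  have Z0: "\<forall>x\<in>set Z. x = 0" using vine_exps[OF N(3)] Z_def by simp
  have "ef N 0 = 0" using le by (simp add: exps_fun_def)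
  moreover have "ef N u = 0" if u1: "1 \<le> u" and nb: "\<not> below K (ef N) u" for u
  proof -
    obtain v where v: "v < u" "\<not> Dv (ef N) v < int K" using nb unfolding below_def by blast
    have D: "Dv (ef N) v = int v - int (sum_list (take v (P @ Z)))" using le Dv_list by simp
    have "length P \<le> v"
    proof (rule ccontr)
      assume "\<not> length P \<le> v"
      then have vl: "v < length P" by simp
      then have "take v (P @ Z) = take v P" by simp
      then have "Dv (ef N) v < int (length ls)" using D blocks[of v ls] vl unfolding P_def by simp
      then show False using v(2) N(2) by simp
    qed
    obtain u' where u': "u = Suc u'" using u1 by (cases u) auto
    have "ef N u = exps_fun (P @ Z) u'" using le u' by (simp add: exps_fun_Cons_Suc)
    also have "\<dots> = 0"
    proof (cases "u' < length (P @ Z)")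
      case True
      have "(P @ Z) ! u' = Z ! (u' - length P)" using \<open>length P \<le> v\<close> v(1) u' by (simp add: nth_append)
      moreover have "u' - length P < length Z" using True \<open>length P \<le> v\<close> v(1) u' by simp
      ultimately have "(P @ Z) ! u' \<in> set Z" by simp
      then show ?thesis using Z0 True by (simp add: exps_fun_def)
    next
      case False then show ?thesis by (simp add: exps_fun_def)
    qed
    finally show ?thesis .
  qed
  ultimately show ?thesis by blast
qed

lemma canon_unique:
  assumes c1: "canon K N1" and c2: "canon K N2" and C: "Cf K (ef N1) (ef N2)"
    and n: "num_nodes N1 = num_nodes N2"
  shows "N1 = N2"
proof -
  have e1: "ef N1 0 = 0 \<and> (\<forall>u. 1 \<le> u \<longrightarrow> \<not> below K (ef N1) u \<longrightarrow> ef N1 u = 0)"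
    using canon_exps[OF c1] .
  have e2: "ef N2 0 = 0 \<and> (\<forall>u. 1 \<le> u \<longrightarrow> \<not> below K (ef N2) u \<longrightarrow> ef N2 u = 0)"
    using canon_exps[OF c2] .
  have eq: "ef N1 u = ef N2 u" for u
  proof (cases "u = 0")
    case True then show ?thesis using e1 e2 by simp
  next
    case False
    then have u1: "1 \<le> u" by simp
    show ?thesis
    proof (cases "below K (ef N1) u")
      case True then show ?thesis using C u1 unfolding Cf_def by simp
    next
      case False
      then have "\<not> below K (ef N2) u" using Cf_below[OF C] by simp
      then show ?thesis using e1 e2 False u1 by simp
    qed
  qed
  have len: "length (leaf_exps N1) = length (leaf_exps N2)" using n by (simp add: le_len)
  have "leaf_exps N1 = leaf_exps N2"
  proof (rule nth_equalityI)
    show "length (leaf_exps N1) = length (leaf_exps N2)" by (rule len)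
  next
    fix i assume "i < length (leaf_exps N1)"
    then show "leaf_exps N1 ! i = leaf_exps N2 ! i" using eq[of i] len by (simp add: exps_fun_def)
  qed
  then show ?thesis by (rule le_inj)
qed

theorem lemma3p6:
  fixes ilist :: "nat list" and T1 T2 :: tree and w' :: nform
  assumes "ilist \<noteq> []" and "sorted_wrt (<) ilist" and "0 < hd ilist"
    and "num_nodes T1 = num_nodes T2"
    and "reduce_step\<^sup>*\<^sup>* (assoc_word T1 T2) w'" and "partially_reduced w'"
  shows "((\<exists>t. 1 \<le> t \<and> t \<le> hd ilist - 1 \<and> occurs w' t)
            \<longrightarrow> \<not> rra_defined (insert 0 (set ilist)) T1 T2)
       \<and> (\<not> (\<exists>t. 1 \<le> t \<and> t \<le> hd ilist - 1 \<and> occurs w' t)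
            \<longrightarrow> rra_defined (insert 0 (set ilist)) T1 T2)"
proof -
  define K where "K = hd ilist - 1"
  define Lv where "Lv = insert 0 (set ilist)"
  obtain x xs where ix: "ilist = x # xs" using assms(1) by (cases ilist) auto
  have xK: "x = Suc K" using assms(3) ix K_def by simp
  have lv: "\<forall>j\<in>Lv. j = 0 \<or> Suc K \<le> j"
  proof
    fix j assume "j \<in> Lv"
    then have "j = 0 \<or> j = x \<or> j \<in> set xs" using Lv_def ix by auto
    moreover have "\<forall>y\<in>set xs. x < y" using assms(2) ix by simp
    ultimately show "j = 0 \<or> Suc K \<le> j" using xK by auto
  qed
  have l0: "0 \<in> Lv" using Lv_def by simp
  have lK: "Suc K \<in> Lv" using Lv_def ix xK by simp
  have aw: "assoc_word T1 T2 = (ef T2, ef T1)" by (simp add: assoc_word_def)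
  have R1: "Cf K (fst w') (snd w') \<longleftrightarrow> Cf K (ef T2) (ef T1)"
    using reds_Cf[OF assms(5), of K] aw by simp
  define N where "N = Suc (num_nodes T1)"
  have fin0: "\<forall>j\<ge>N. fst (assoc_word T1 T2) j = 0 \<and> snd (assoc_word T1 T2) j = 0"
    using aw assms(4) le_len[of T1] le_len[of T2] N_def by (simp add: exps_fun_def)
  have fin: "\<forall>j\<ge>N. fst w' j = 0 \<and> snd w' j = 0"
    using reds_fin[OF assms(5) fin0] .
  have R2: "Cf K (fst w') (snd w') \<longleftrightarrow> \<not> (\<exists>t. 1 \<le> t \<and> t \<le> K \<and> occurs w' t)"
    using noocc_Cf[of K w'] Cf_noocc[of K w' N, OF _ assms(6) fin] by blast
  have R3: "rra_defined Lv T1 T2 \<longleftrightarrow> Cf K (ef T2) (ef T1)"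
  proof
    assume "rra_defined Lv T1 T2"
    then have "(rra_step Lv)\<^sup>*\<^sup>* T1 T2" unfolding rra_defined_def .
    then have "Cf K (ef T1) (ef T2)" by (rule G_Cf[OF lv])
    then show "Cf K (ef T2) (ef T1)" by (rule Cf_sym)
  next
    assume C: "Cf K (ef T2) (ef T1)"
    obtain N1 where N1: "(rra_step Lv)\<^sup>*\<^sup>* T1 N1" "canon K N1" using reach_canon[OF l0 lK] by blast
    obtain N2 where N2: "(rra_step Lv)\<^sup>*\<^sup>* T2 N2" "canon K N2" using reach_canon[OF l0 lK] by blast
    have c1: "Cf K (ef T1) (ef N1)" by (rule G_Cf[OF lv N1(1)])
    have c2: "Cf K (ef T2) (ef N2)" by (rule G_Cf[OF lv N2(1)])
    have "Cf K (ef N1) (ef N2)"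
      using Cf_trans[OF Cf_trans[OF Cf_sym[OF c1] Cf_sym[OF C]] c2] .
    moreover have "num_nodes N1 = num_nodes N2"
      using G_nodes[OF N1(1)] G_nodes[OF N2(1)] assms(4) by simp
    ultimately have "N1 = N2" using canon_unique N1(2) N2(2) by blast
    then have "(rra_step Lv)\<^sup>*\<^sup>* T1 T2" using N1(1) G_sym[OF N2(1)] by simp
    then show "rra_defined Lv T1 T2" unfolding rra_defined_def .
  qed
  show ?thesis using R1 R2 R3 unfolding K_def Lv_def by blast
qed

end
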